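(* Let $(D,\Gamma)$ be a consistent action theory, $n\ge0$, and let $X$ be an answer set of the program $\pi$. Then: (i) $s_t(X)$ is a state of $D$ for every $t\in\{0,\dots,n\}$; (ii) for every $t\in\{0,\dots,n-1\}$ and action $a$, if $occ(a,t)\in X$ then $a$ is executable in $s_t(X)$ and $s_{t+1}(X)\in\Phi(a,s_t(X))$; (iii) for every $t\in\{0,\dots,n-1\}$, if $occ(a,t)\notin X$ for every action $a$, then $s_{t+1}(X)=s_t(X)$.
   Context: Action language $\mathcal{B}$: fix finite sets $\mathbf{F}$ of fluents and $\mathbf{A}$ of actions. A fluent literal is $f$ or $\neg f$ ($f\in\mathbf{F}$); the complement $\bar l$ of $f$ is $\neg f$ and of $\neg f$ is $f$. A set of fluent literals is consistent if it contains no pair $f,\neg f$; an interpretation is a maximal consistent set. For a set $u$ of literals, $u\models p_1\wedge\dots\wedge p_k$ means $\{p_1,\dots,p_k\}\subseteq u$. A domain description $D$ is a finite set of static causal laws $\mathbf{caused}(\{p_1,\dots,p_k\},f)$ (their set is $D_C$), dynamic causal laws $\mathbf{causes}(a,f,\{p_1,\dots,p_k\})$ and executability conditions $\mathbf{executable}(a,\{p_1,\dots,p_k\})$, with $a\in\mathbf{A}$ and $f,p_i$ fluent literals; $\Gamma$ is a set of propositions $\mathbf{initially}(f)$. A consistent set $u$ is closed under $D_C$ if for every $\mathbf{caused}(P,f)\in D_C$ with $P\subseteq u$, $f\in u$; $Cl_{D_C}(u)$ is the least consistent superset of $u$ closed under $D_C$ (undefined if none). A state is an interpretation closed under $D_C$.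 Action $a$ is executable in state $s$ if some $\mathbf{executable}(a,P)\in D$ has $P\subseteq s$. $E(a,s)=\{f\mid \mathbf{causes}(a,f,P)\in D,\ P\subseteq s\}$. $\Phi(a,s)=\{s'\mid s'\text{ a state},\ s'=Cl_{D_C}(E(a,s)\cup(s\cap s'))\}$ if $a$ is executable in $s$, and $\Phi(a,s)=\emptyset$ otherwise. A trajectory is a sequence $s_0a_0s_1\dots a_{m-1}s_m$ of states $s_i$ and actions $a_i$ with $s_{i+1}\in\Phi(a_i,s_i)$. $D$ is consistent if $\Phi(a,s)\ne\emptyset$ whenever $a$ is executable in state $s$; $(D,\Gamma)$ is consistent if $D$ is consistent and $s_0^\Gamma:=\{f\mid\mathbf{initially}(f)\in\Gamma\}$ is a state of $D$. Answer sets: a ground normal program consists of rules $h\leftarrow b_1,\dots,b_m,\mathit{not}\,c_1,\dots,\mathit{not}\,c_r$ and constraints $\bot\leftarrow b_1,\dots,b_m,\mathit{not}\,c_1,\dots,\mathit{not}\,c_r$. For a set $S$ of atoms, the reduct $\Pi^S$ deletes every rule/constraint containing $\mathit{not}\,c$ with $c\in S$ and deletes all $\mathit{not}$-literals from the rest; $S$ is an answer set of $\Pi$ if $S$ is the least set of atoms closed under the non-constraint rules of $\Pi^S$ and no constraint of $\Pi^S$ has its whole body contained in $S$. The program $\pi$ (ground; $t$ ranges over $\{0,\dots,n\}$ unless stated): (1) $holds(l,0)\leftarrow$ for each $\mathbf{initially}(l)\in\Gamma$; (2) $possible(a,t)\leftarrow holds(p_1,t),\dots,holds(p_k,t)$ for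 each $\mathbf{executable}(a,\{p_1,\dots,p_k\})\in D$; (3) for $t\in\{0,\dots,n-1\}$, $holds(f,t+1)\leftarrow occ(a,t),possible(a,t),holds(p_1,t),\dots,holds(p_k,t)$ for each $\mathbf{causes}(a,f,\{p_1,\dots,p_k\})\in D$; (4) $holds(f,t)\leftarrow holds(p_1,t),\dots,holds(p_k,t)$ for each $\mathbf{caused}(\{p_1,\dots,p_k\},f)\in D$; (5) $occ(a,t)\leftarrow possible(a,t),\mathit{not}\,nocc(a,t)$ for each action $a$; (6) $nocc(a,t)\leftarrow occ(b,t)$ for each pair of distinct actions $a\ne b$; (7) for $t\in\{0,\dots,n-1\}$, $holds(l,t+1)\leftarrow holds(l,t),\mathit{not}\,holds(\bar l,t+1)$ for each fluent literal $l$; (8) $\bot\leftarrow holds(f,t),holds(\neg f,t)$ for each fluent $f$. For a set $M$ of atoms, $s_i(M)=\{l\mid l\text{ a fluent literal},\ holds(l,i)\in M\}$. *)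

theory Defs
  imports Main
begin

datatype 'f lit = Pos 'f | Neg 'f

fun compl :: "'f lit \<Rightarrow> 'f lit" where
  "compl (Pos f) = Neg f"
| "compl (Neg f) = Pos f"

datatype ('f, 'a) law =
    Caused "'f lit set" "'f lit"
  | Causes 'a "'f lit" "'f lit set"
  | Executable 'a "'f lit set"

definition consistent :: "'f lit set \<Rightarrow> bool" where
  "consistent u \<longleftrightarrow> (\<forall>f. \<not> (Pos f \<in> u \<and> Neg f \<in> u))"

definition is_interpretation :: "'f lit set \<Rightarrow> bool" where
  "is_interpretation u \<longleftrightarrow> consistent u \<and> (\<forall>v. consistent v \<and> u \<subseteq> v \<longrightarrow> v = u)"

definition static_laws :: "('f, 'a) law set \<Rightarrow> ('f lit set \<times> 'f lit) set" where
  "static_laws D = {(P, l). Caused P l \<in> D}"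

definition closed_under :: "('f lit set \<times> 'f lit) set \<Rightarrow> 'f lit set \<Rightarrow> bool" where
  "closed_under DC u \<longleftrightarrow> (\<forall>(P, l) \<in> DC. P \<subseteq> u \<longrightarrow> l \<in> u)"

definition is_Cl :: "('f lit set \<times> 'f lit) set \<Rightarrow> 'f lit set \<Rightarrow> 'f lit set \<Rightarrow> bool" where
  "is_Cl DC u v \<longleftrightarrow> consistent v \<and> u \<subseteq> v \<and> closed_under DC v \<and>
     (\<forall>w. consistent w \<and> u \<subseteq> w \<and> closed_under DC w \<longrightarrow> v \<subseteq> w)"

definition state :: "('f, 'a) law set \<Rightarrow> 'f lit set \<Rightarrow> bool" where
  "state D s \<longleftrightarrow> is_interpretation s \<and> closed_under (static_laws D) s"

definition executable :: "('f, 'a) law set \<Rightarrow> 'a \<Rightarrow> 'f lit set \<Rightarrow> bool" where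
  "executable D a s \<longleftrightarrow> (\<exists>P. Executable a P \<in> D \<and> P \<subseteq> s)"

definition effects :: "('f, 'a) law set \<Rightarrow> 'a \<Rightarrow> 'f lit set \<Rightarrow> 'f lit set" where
  "effects D a s = {f. \<exists>P. Causes a f P \<in> D \<and> P \<subseteq> s}"

definition Phi :: "('f, 'a) law set \<Rightarrow> 'a \<Rightarrow> 'f lit set \<Rightarrow> 'f lit set set" where
  "Phi D a s = (if executable D a s then
      {s'. state D s' \<and> is_Cl (static_laws D) (effects D a s \<union> (s \<inter> s')) s'} else {})"

definition consistent_domain :: "('f, 'a) law set \<Rightarrow> bool" where
  "consistent_domain D \<longleftrightarrow> (\<forall>a s. state D s \<and> executable D a s \<longrightarrow> Phi D a s \<noteq> {})"

text \<open>Gamma is represented by the set of literals l with initially(l) in Gamma.\<close>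
definition consistent_theory :: "('f, 'a) law set \<Rightarrow> 'f lit set \<Rightarrow> bool" where
  "consistent_theory D Gamma \<longleftrightarrow> consistent_domain D \<and> state D Gamma"

text \<open>A rule is (head, positive body, negative body); head None means a constraint (bottom).\<close>
type_synonym 'x rule = "'x option \<times> 'x set \<times> 'x set"

definition reduct :: "'x rule set \<Rightarrow> 'x set \<Rightarrow> ('x option \<times> 'x set) set" where
  "reduct Pi S = {(h, B). \<exists>N. (h, B, N) \<in> Pi \<and> N \<inter> S = {}}"

definition closed_prog :: "('x option \<times> 'x set) set \<Rightarrow> 'x set \<Rightarrow> bool" where
  "closed_prog R M \<longleftrightarrow> (\<forall>h B. (Some h, B) \<in> R \<and> B \<subseteq> M \<longrightarrow> h \<in> M)"

definition answer_set :: "'x rule set \<Rightarrow> 'x set \<Rightarrow> bool" where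
  "answer_set Pi S \<longleftrightarrow>
     closed_prog (reduct Pi S) S \<and>
     (\<forall>M. closed_prog (reduct Pi S) M \<longrightarrow> S \<subseteq> M) \<and>
     (\<forall>B. (None, B) \<in> reduct Pi S \<longrightarrow> \<not> B \<subseteq> S)"

datatype ('f, 'a) atom =
    Holds "'f lit" nat | Possible 'a nat | Occ 'a nat | Nocc 'a nat

definition prog :: "('f, 'a) law set \<Rightarrow> 'f lit set \<Rightarrow> nat \<Rightarrow> ('f, 'a) atom rule set" where
  "prog D Gamma n =
     {(Some (Holds l 0), {}, {}) | l. l \<in> Gamma}
   \<union> {(Some (Possible a t), (\<lambda>p. Holds p t) ` P, {}) | a P t. Executable a P \<in> D \<and> t \<le> n}
   \<union> {(Some (Holds f (Suc t)), {Occ a t, Possible a t} \<union> (\<lambda>p. Holds p t) ` P, {}) | a f P t.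
        Causes a f P \<in> D \<and> t < n}
   \<union> {(Some (Holds f t), (\<lambda>p. Holds p t) ` P, {}) | f P t. Caused P f \<in> D \<and> t \<le> n}
   \<union> {(Some (Occ a t), {Possible a t}, {Nocc a t}) | a t. t \<le> n}
   \<union> {(Some (Nocc a t), {Occ b t}, {}) | a b t. a \<noteq> b \<and> t \<le> n}
   \<union> {(Some (Holds l (Suc t)), {Holds l t}, {Holds (compl l) (Suc t)}) | l t. t < n}
   \<union> {(None, {Holds (Pos f) t, Holds (Neg f) t}, {}) | f t. t \<le> n}"

definition st :: "('f, 'a) atom set \<Rightarrow> nat \<Rightarrow> 'f lit set" where
  "st M i = {l. Holds l i \<in> M}"

end

theory Submission
  imports Defs
begin

lemma as_closed:
  assumes "answer_set Pi X" "(Some h, B, N) \<in> Pi" "N \<inter> X = {}" "B \<subseteq> X"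
  shows "h \<in> X"
  using assms unfolding answer_set_def closed_prog_def reduct_def by blast

lemma as_closed2:
  assumes "answer_set Pi X" "(Some h, B, N) \<in> Pi" "B \<subseteq> X" "N \<inter> X = {}"
  shows "h \<in> X"
  using as_closed[OF assms(1,2,4,3)] .

lemma as_min:
  assumes "answer_set Pi X"
    and "\<And>h B N. (Some h, B, N) \<in> Pi \<Longrightarrow> N \<inter> X = {} \<Longrightarrow> B \<subseteq> M \<Longrightarrow> h \<in> M"
  shows "X \<subseteq> M"
proof -
  have "closed_prog (reduct Pi X) M"
    unfolding closed_prog_def reduct_def using assms(2) by blast
  then show ?thesis using assms(1) unfolding answer_set_def by blast
qed

lemma as_constr:
  assumes "answer_set Pi X" "(None, B, N) \<in> Pi" "N \<inter> X = {}"
  shows "\<not> B \<subseteq> X"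
  using assms unfolding answer_set_def reduct_def by blast

lemma as_support:
  assumes "answer_set Pi X" "x \<in> X"
  shows "\<exists>B N. (Some x, B, N) \<in> Pi \<and> N \<inter> X = {} \<and> B \<subseteq> X"
proof (rule ccontr)
  assume c: "\<not> ?thesis"
  have "X \<subseteq> X - {x}"
  proof (rule as_min[OF assms(1)])
    fix h B N assume h: "(Some h, B, N) \<in> Pi" "N \<inter> X = {}" "B \<subseteq> X - {x}"
    then have "h \<in> X" using as_closed[OF assms(1)] by blast
    moreover have "h \<noteq> x" using c h by blast
    ultimately show "h \<in> X - {x}" by blast
  qed
  then show False using assms(2) by blast
qed

lemma interp_iff:
  "is_interpretation u \<longleftrightarrow> consistent u \<and> (\<forall>f. Pos f \<in> u \<or> Neg f \<in> u)"
proof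
  assume a: "is_interpretation u"
  show "consistent u \<and> (\<forall>f. Pos f \<in> u \<or> Neg f \<in> u)"
  proof (intro conjI allI)
    show "consistent u" using a unfolding is_interpretation_def by blast
    fix f show "Pos f \<in> u \<or> Neg f \<in> u"
    proof (rule ccontr)
      assume n: "\<not> (Pos f \<in> u \<or> Neg f \<in> u)"
      have "consistent (insert (Pos f) u)"
        using a n unfolding is_interpretation_def consistent_def by auto
      then have "insert (Pos f) u = u" using a unfolding is_interpretation_def by blast
      then show False using n by blast
    qed
  qed
next
  assume a: "consistent u \<and> (\<forall>f. Pos f \<in> u \<or> Neg f \<in> u)"
  show "is_interpretation u"
    unfolding is_interpretation_def
  proof (intro conjI allI impI)
    show "consistent u" using a by blast
    fix v assume v: "consistent v \<and> u \<subseteq> v"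
    show "v = u"
    proof
      show "u \<subseteq> v" using v by blast
      show "v \<subseteq> u"
      proof
        fix l assume l: "l \<in> v"
        show "l \<in> u"
        proof (cases l)
          case (Pos f) then show ?thesis using a v l unfolding consistent_def by blast
        next
          case (Neg f) then show ?thesis using a v l unfolding consistent_def by blast
        qed
      qed
    qed
  qed
qed

lemma prog_init: "l \<in> Gamma \<Longrightarrow> (Some (Holds l 0), {}, {}) \<in> prog D Gamma n"
  unfolding prog_def by (rule UnI1, rule UnI1, rule UnI1, rule UnI1, rule UnI1, rule UnI1, rule UnI1, blast)
lemma prog_caus: "Causes a f P \<in> D \<Longrightarrow> t < n \<Longrightarrow>
  (Some (Holds f (Suc t)), {Occ a t, Possible a t} \<union> (\<lambda>p. Holds p t) ` P, {}) \<in> prog D Gamma n"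
  unfolding prog_def by (rule UnI1, rule UnI1, rule UnI1, rule UnI1, rule UnI1, rule UnI2, blast)
lemma prog_stat: "Caused P f \<in> D \<Longrightarrow> t \<le> n \<Longrightarrow>
  (Some (Holds f t), (\<lambda>p. Holds p t) ` P, {}) \<in> prog D Gamma n"
  unfolding prog_def by (rule UnI1, rule UnI1, rule UnI1, rule UnI1, rule UnI2, blast)
lemma prog_nocc: "a \<noteq> b \<Longrightarrow> t \<le> n \<Longrightarrow> (Some (Nocc a t), {Occ b t}, {}) \<in> prog D Gamma n"
  unfolding prog_def by (rule UnI1, rule UnI1, rule UnI2, blast)
lemma prog_inert: "t < n \<Longrightarrow>
  (Some (Holds l (Suc t)), {Holds l t}, {Holds (compl l) (Suc t)}) \<in> prog D Gamma n"
  unfolding prog_def by (rule UnI1, rule UnI2, blast)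
lemma prog_constr: "t \<le> n \<Longrightarrow> (None, {Holds (Pos f) t, Holds (Neg f) t}, {}) \<in> prog D Gamma n"
  unfolding prog_def by (rule UnI2, blast)

lemma prog_holds_suc:
  assumes "(Some (Holds l (Suc t)), B, N) \<in> prog D Gamma n"
  shows "(\<exists>a P. B = {Occ a t, Possible a t} \<union> (\<lambda>p. Holds p t) ` P \<and> Causes a l P \<in> D)
    \<or> (\<exists>P. B = (\<lambda>p. Holds p (Suc t)) ` P \<and> Caused P l \<in> D)
    \<or> (B = {Holds l t} \<and> N = {Holds (compl l) (Suc t)})"
  using assms unfolding prog_def
  apply (elim UnE)
  apply (elim CollectE exE conjE)
  apply simp_all
  apply blast+
  done
context
  fixes D :: "('f, 'a) law set" and Gamma :: "'f lit set"
    and n :: nat and X :: "('f, 'a) atom set"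
  assumes AS: "answer_set (prog D Gamma n) X"
begin

lemma occ_support:
  assumes "Occ a t \<in> X"
  shows "Possible a t \<in> X \<and> Nocc a t \<notin> X \<and> t \<le> n"
proof -
  obtain B N where "(Some (Occ a t), B, N) \<in> prog D Gamma n" "N \<inter> X = {}" "B \<subseteq> X"
    using as_support[OF AS assms] by blast
  then show ?thesis unfolding prog_def
    apply (elim UnE)
    apply (elim CollectE exE conjE)
    apply simp_all
    done
qed

lemma poss_support:
  assumes "Possible a t \<in> X"
  shows "executable D a (st X t)"
proof -
  obtain B N where "(Some (Possible a t), B, N) \<in> prog D Gamma n" "N \<inter> X = {}" "B \<subseteq> X"
    using as_support[OF AS assms] by blast
  then show ?thesis unfolding prog_def
    apply (elim UnE)
    apply (elim CollectE exE conjE)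
    apply simp_all
    apply (auto simp: executable_def st_def)
    done
qed

lemma occ_unique:
  assumes "Occ a t \<in> X" "Occ b t \<in> X"
  shows "a = b"
proof (rule ccontr)
  assume ab: "a \<noteq> b"
  have t: "t \<le> n" using occ_support[OF assms(1)] by simp
  have "(Some (Nocc a t), {Occ b t}, {}) \<in> prog D Gamma n"
    using ab t by (rule prog_nocc)
  then have "Nocc a t \<in> X" by (rule as_closed2[OF AS]) (use assms(2) in simp_all)
  then show False using occ_support[OF assms(1)] by simp
qed

lemma step_min:
  assumes t: "t < n" and w: "closed_under (static_laws D) w"
    and eff: "\<And>b f P. Causes b f P \<in> D \<Longrightarrow> Occ b t \<in> X \<Longrightarrow> P \<subseteq> st X t \<Longrightarrow> f \<in> w"
    and inr: "st X t \<inter> st X (Suc t) \<subseteq> w"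
  shows "st X (Suc t) \<subseteq> w"
proof -
  let ?M = "X - {Holds l (Suc t) | l. l \<notin> w}"
  have "X \<subseteq> ?M"
  proof (rule as_min[OF AS])
    fix h B N assume r: "(Some h, B, N) \<in> prog D Gamma n" "N \<inter> X = {}" "B \<subseteq> ?M"
    have hX: "h \<in> X" by (rule as_closed2[OF AS r(1)]) (use r(2,3) in auto)
    have "\<not> (\<exists>l. h = Holds l (Suc t) \<and> l \<notin> w)"
    proof
      assume "\<exists>l. h = Holds l (Suc t) \<and> l \<notin> w"
      then obtain l where l: "h = Holds l (Suc t)" "l \<notin> w" by blast
      from prog_holds_suc[OF r(1)[unfolded l(1)]] show False
      proof (elim disjE exE conjE)
        fix a P assume B: "B = {Occ a t, Possible a t} \<union> (\<lambda>p. Holds p t) ` P" "Causes a l P \<in> D"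
        have "Occ a t \<in> X" using r(3) B(1) by blast
        moreover have "P \<subseteq> st X t" using r(3) B(1) unfolding st_def by blast
        ultimately show False using eff B(2) l(2) by blast
      next
        fix P assume B: "B = (\<lambda>p. Holds p (Suc t)) ` P" "Caused P l \<in> D"
        have "P \<subseteq> w" using r(3) B(1) by blast
        moreover have "(P, l) \<in> static_laws D" using B(2) by (simp add: static_laws_def)
        ultimately show False using w l(2) unfolding closed_under_def by blast
      next
        assume B: "B = {Holds l t}" "N = {Holds (compl l) (Suc t)}"
        have "l \<in> st X t" using r(3) B(1) unfolding st_def by blast
        moreover have "l \<in> st X (Suc t)" using hX l(1) unfolding st_def by blast
        ultimately show False using inr l(2) by blast
      qed
    qed
    then show "h \<in> ?M" using hX by blast
  qed
  then show ?thesis unfolding st_def by blast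
qed

end

theorem mainTheorem5:
  fixes D :: "('f::finite, 'a::finite) law set" and Gamma :: "'f lit set"
    and n :: nat and X :: "('f, 'a) atom set"
  assumes "finite D"
    and "consistent_theory D Gamma"
    and "answer_set (prog D Gamma n) X"
  shows "(\<forall>t\<le>n. state D (st X t))
       \<and> (\<forall>t<n. \<forall>a. Occ a t \<in> X \<longrightarrow>
             executable D a (st X t) \<and> st X (Suc t) \<in> Phi D a (st X t))
       \<and> (\<forall>t<n. (\<forall>a. Occ a t \<notin> X) \<longrightarrow> st X (Suc t) = st X t)"
proof -
  note AS = assms(3)
  have G: "state D Gamma" using assms(2) unfolding consistent_theory_def by blast
  have cons: "consistent (st X t)" if "t \<le> n" for t
    unfolding consistent_def
  proof (intro allI notI)
    fix f assume "Pos f \<in> st X t \<and> Neg f \<in> st X t"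
    moreover have "(None, {Holds (Pos f) t, Holds (Neg f) t}, {}) \<in> prog D Gamma n"
      using that by (rule prog_constr)
    moreover have "\<not> {Holds (Pos f) t, Holds (Neg f) t} \<subseteq> X"
      using as_constr[OF AS] calculation(2) by blast
    ultimately show False unfolding st_def by blast
  qed
  have clos: "closed_under (static_laws D) (st X t)" if "t \<le> n" for t
    unfolding closed_under_def
  proof (intro ballI impI, clarify)
    fix P l assume a: "(P, l) \<in> static_laws D" "P \<subseteq> st X t"
    have "(Some (Holds l t), (\<lambda>p. Holds p t) ` P, {}) \<in> prog D Gamma n"
      using a(1) by (intro prog_stat that) (simp add: static_laws_def)
    moreover have "(\<lambda>p. Holds p t) ` P \<subseteq> X" using a(2) unfolding st_def by blast
    ultimately have "Holds l t \<in> X" by (rule as_closed2[OF AS]) simp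
    then show "l \<in> st X t" unfolding st_def by simp
  qed
  have compl: "Pos f \<in> st X t \<or> Neg f \<in> st X t" if "t \<le> n" for t f
    using that
  proof (induction t arbitrary: f)
    case 0
    have "Gamma \<subseteq> st X 0"
    proof
      fix l assume "l \<in> Gamma"
      then have "(Some (Holds l 0), {}, {}) \<in> prog D Gamma n" by (rule prog_init)
      then have "Holds l 0 \<in> X" by (rule as_closed2[OF AS]) simp_all
      then show "l \<in> st X 0" unfolding st_def by simp
    qed
    then show ?case using G unfolding state_def interp_iff by blast
  next
    case (Suc t)
    obtain l where l: "l \<in> st X t" "l = Pos f \<or> l = Neg f" using Suc by auto
    show ?case
    proof (cases "Holds (compl l) (Suc t) \<in> X")
      case True
      then show ?thesis using l(2) unfolding st_def by auto
    next
      case False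
      have "(Some (Holds l (Suc t)), {Holds l t}, {Holds (compl l) (Suc t)}) \<in> prog D Gamma n"
        using Suc by (intro prog_inert) simp
      then have "Holds l (Suc t) \<in> X" by (rule as_closed2[OF AS]) (use False l(1) in \<open>auto simp: st_def\<close>)
      then show ?thesis using l(2) unfolding st_def by auto
    qed
  qed
  have S: "state D (st X t)" if "t \<le> n" for t
    unfolding state_def interp_iff using cons clos compl that by blast
  have P2: "executable D a (st X t) \<and> st X (Suc t) \<in> Phi D a (st X t)"
    if t: "t < n" and o: "Occ a t \<in> X" for t a
  proof -
    have ex: "executable D a (st X t)"
      using poss_support[OF AS] occ_support[OF AS o] by simp
    have effs: "effects D a (st X t) \<subseteq> st X (Suc t)"
    proof
      fix f assume "f \<in> effects D a (st X t)"
      then obtain P where P: "Causes a f P \<in> D" "P \<subseteq> st X t" unfolding effects_def by blast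
      have "(Some (Holds f (Suc t)), {Occ a t, Possible a t} \<union> (\<lambda>p. Holds p t) ` P, {}) \<in> prog D Gamma n"
        using P(1) t by (rule prog_caus)
      moreover have "{Occ a t, Possible a t} \<union> (\<lambda>p. Holds p t) ` P \<subseteq> X"
        using o occ_support[OF AS o] P(2) unfolding st_def by blast
      ultimately have "Holds f (Suc t) \<in> X" by (rule as_closed2[OF AS]) simp
      then show "f \<in> st X (Suc t)" unfolding st_def by simp
    qed
    have "is_Cl (static_laws D) (effects D a (st X t) \<union> (st X t \<inter> st X (Suc t))) (st X (Suc t))"
      unfolding is_Cl_def
    proof (intro conjI allI impI)
      show "consistent (st X (Suc t))" using cons t by simp
      show "effects D a (st X t) \<union> (st X t \<inter> st X (Suc t)) \<subseteq> st X (Suc t)" using effs by blast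
      show "closed_under (static_laws D) (st X (Suc t))" using clos t by simp
      fix w assume w: "consistent w \<and> effects D a (st X t) \<union> (st X t \<inter> st X (Suc t)) \<subseteq> w \<and>
        closed_under (static_laws D) w"
      show "st X (Suc t) \<subseteq> w"
      proof (rule step_min[OF AS t])
        show "closed_under (static_laws D) w" using w by blast
        show "st X t \<inter> st X (Suc t) \<subseteq> w" using w by blast
        fix b f P assume "Causes b f P \<in> D" "Occ b t \<in> X" "P \<subseteq> st X t"
        moreover have "b = a" using occ_unique[OF AS \<open>Occ b t \<in> X\<close> o] .
        ultimately have "f \<in> effects D a (st X t)" unfolding effects_def by blast
        then show "f \<in> w" using w by blast
      qed
    qed
    then show ?thesis using ex S t unfolding Phi_def by simp
  qed
  have P3: "st X (Suc t) = st X t" if t: "t < n" and no: "\<forall>a. Occ a t \<notin> X" for t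
  proof -
    have sub: "st X (Suc t) \<subseteq> st X t"
      by (rule step_min[OF AS t]) (use clos t no in auto)
    have "is_interpretation (st X (Suc t))" "consistent (st X t)"
      using S[of "Suc t"] cons[of t] t unfolding state_def by auto
    then show ?thesis using sub unfolding is_interpretation_def by blast
  qed
  show ?thesis using S P2 P3 by blast
qed

end
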